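(* Let $X=\{(u,v)\in\mathbb{R}^2:0<u<1,\ 0<v<1\}$ with the Euclidean topology $\tau$ and the coordinatewise partial order $\preceq$. Then: (i) $(X,\tau,\preceq)$ is a locally compact, order-connected Hausdorff topological lattice; (ii) the canonical map $x\mapsto x^\downarrow$ topologically order-embeds $(X,\tau,\preceq)$ in $(C(X),\tau_F,\subseteq)$; (iii) the map $x\mapsto x^\downarrow$ from $(X,\tau)$ to $(C^\downarrow(X),\tau_V)$ is discontinuous at every point of $X$.
   Context: A partially ordered topological space is a topological space with a partial order whose graph is closed in the product; a topological lattice is one in which all binary meets and joins exist and $\wedge,\vee:X\times X\to X$ are continuous. $x^\downarrow=\{u\in X:u\preceq x\}$, $x^\uparrow=\{u\in X:x\preceq u\}$; order-connected means $x^\uparrow\cap y^\downarrow$ is connected whenever $x\preceq y$. $C(X)$ = closed subsets of $X$, $C^\downarrow(X)=\{x^\downarrow:x\in X\}$. Fell topology $\tau_F$: generated by $\{A:A\cap O\neq\emptyset\}$ ($O$ open) and $\{A:A\cap D=\emptyset\}$ ($D$ compact). Vietoris topology $\tau_V$: generated by $\{A:A\cap O\neq\emptyset\}$ ($O$ open) and $\{A:A\cap E=\emptyset\}$ ($E$ closed). "Topologically order-embeds": $x\preceq y\iff x^\downarrow\subseteq y^\downarrow$ and $x\mapsto x^\downarrow$ is a homeomorphism onto $C^\downarrow(X)$ with the relative Fell topology. *)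

theory Defs
  imports "HOL-Analysis.Analysis"
begin

definition down_set :: "'a topology \<Rightarrow> ('a \<Rightarrow> 'a \<Rightarrow> bool) \<Rightarrow> 'a \<Rightarrow> 'a set" where
  "down_set T le x = {u \<in> topspace T. le u x}"

definition up_set :: "'a topology \<Rightarrow> ('a \<Rightarrow> 'a \<Rightarrow> bool) \<Rightarrow> 'a \<Rightarrow> 'a set" where
  "up_set T le x = {u \<in> topspace T. le x u}"

definition partial_order_on_space :: "'a topology \<Rightarrow> ('a \<Rightarrow> 'a \<Rightarrow> bool) \<Rightarrow> bool" where
  "partial_order_on_space T le \<longleftrightarrow>
     (\<forall>x\<in>topspace T. le x x) \<and>
     (\<forall>x\<in>topspace T. \<forall>y\<in>topspace T. le x y \<and> le y x \<longrightarrow> x = y) \<and>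
     (\<forall>x\<in>topspace T. \<forall>y\<in>topspace T. \<forall>z\<in>topspace T. le x y \<and> le y z \<longrightarrow> le x z)"

definition po_space :: "'a topology \<Rightarrow> ('a \<Rightarrow> 'a \<Rightarrow> bool) \<Rightarrow> bool" where
  "po_space T le \<longleftrightarrow> partial_order_on_space T le \<and>
     closedin (prod_topology T T) {(x, y). x \<in> topspace T \<and> y \<in> topspace T \<and> le x y}"

definition is_meet :: "'a topology \<Rightarrow> ('a \<Rightarrow> 'a \<Rightarrow> bool) \<Rightarrow> 'a \<Rightarrow> 'a \<Rightarrow> 'a \<Rightarrow> bool" where
  "is_meet T le x y m \<longleftrightarrow> m \<in> topspace T \<and> le m x \<and> le m y \<and>
     (\<forall>z\<in>topspace T. le z x \<and> le z y \<longrightarrow> le z m)"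

definition is_join :: "'a topology \<Rightarrow> ('a \<Rightarrow> 'a \<Rightarrow> bool) \<Rightarrow> 'a \<Rightarrow> 'a \<Rightarrow> 'a \<Rightarrow> bool" where
  "is_join T le x y j \<longleftrightarrow> j \<in> topspace T \<and> le x j \<and> le y j \<and>
     (\<forall>z\<in>topspace T. le x z \<and> le y z \<longrightarrow> le j z)"

definition meet_op :: "'a topology \<Rightarrow> ('a \<Rightarrow> 'a \<Rightarrow> bool) \<Rightarrow> 'a \<Rightarrow> 'a \<Rightarrow> 'a" where
  "meet_op T le x y = (THE m. is_meet T le x y m)"

definition join_op :: "'a topology \<Rightarrow> ('a \<Rightarrow> 'a \<Rightarrow> bool) \<Rightarrow> 'a \<Rightarrow> 'a \<Rightarrow> 'a" where
  "join_op T le x y = (THE j. is_join T le x y j)"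

definition topological_lattice :: "'a topology \<Rightarrow> ('a \<Rightarrow> 'a \<Rightarrow> bool) \<Rightarrow> bool" where
  "topological_lattice T le \<longleftrightarrow> po_space T le \<and>
     (\<forall>x\<in>topspace T. \<forall>y\<in>topspace T. (\<exists>m. is_meet T le x y m) \<and> (\<exists>j. is_join T le x y j)) \<and>
     continuous_map (prod_topology T T) T (\<lambda>(x, y). meet_op T le x y) \<and>
     continuous_map (prod_topology T T) T (\<lambda>(x, y). join_op T le x y)"

definition order_connected :: "'a topology \<Rightarrow> ('a \<Rightarrow> 'a \<Rightarrow> bool) \<Rightarrow> bool" where
  "order_connected T le \<longleftrightarrow>
     (\<forall>x\<in>topspace T. \<forall>y\<in>topspace T. le x y \<longrightarrow> connectedin T (up_set T le x \<inter> down_set T le y))"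

definition closed_sets :: "'a topology \<Rightarrow> 'a set set" where
  "closed_sets T = {A. closedin T A}"

definition fell_topology :: "'a topology \<Rightarrow> 'a set topology" where
  "fell_topology T = subtopology
     (topology_generated_by
        ({{A. A \<inter> G \<noteq> {}} | G. openin T G} \<union> {{A. A \<inter> D = {}} | D. compactin T D}))
     (closed_sets T)"

definition vietoris_topology :: "'a topology \<Rightarrow> 'a set topology" where
  "vietoris_topology T = subtopology
     (topology_generated_by
        ({{A. A \<inter> G \<noteq> {}} | G. openin T G} \<union> {{A. A \<inter> E = {}} | E. closedin T E}))
     (closed_sets T)"

definition topologically_order_embeds_down :: "'a topology \<Rightarrow> ('a \<Rightarrow> 'a \<Rightarrow> bool) \<Rightarrow> bool" where
  "topologically_order_embeds_down T le \<longleftrightarrow>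
     (\<forall>x\<in>topspace T. down_set T le x \<in> closed_sets T) \<and>
     (\<forall>x\<in>topspace T. \<forall>y\<in>topspace T. le x y \<longleftrightarrow> down_set T le x \<subseteq> down_set T le y) \<and>
     homeomorphic_map T (subtopology (fell_topology T) (down_set T le ` topspace T)) (down_set T le)"

definition continuous_map_at :: "'a topology \<Rightarrow> 'b topology \<Rightarrow> ('a \<Rightarrow> 'b) \<Rightarrow> 'a \<Rightarrow> bool" where
  "continuous_map_at T U f x \<longleftrightarrow>
     (\<forall>V. openin U V \<and> f x \<in> V \<longrightarrow> (\<exists>W. openin T W \<and> x \<in> W \<and> f ` W \<subseteq> V))"

definition open_square :: "(real \<times> real) set" where
  "open_square = {(u, v). 0 < u \<and> u < 1 \<and> 0 < v \<and> v < 1}"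

definition coord_le :: "real \<times> real \<Rightarrow> real \<times> real \<Rightarrow> bool" where
  "coord_le p q \<longleftrightarrow> fst p \<le> fst q \<and> snd p \<le> snd q"

end

theory Submission
  imports Defs
begin

abbreviation "SQ \<equiv> top_of_set open_square"

lemma open_sq: "open open_square"
proof -
  have "open_square = ({0<..<1} \<times> {0<..<1})" unfolding open_square_def by auto
  thus ?thesis by (metis open_Times open_greaterThanLessThan)
qed

lemma down_eq: "down_set SQ coord_le x = {u \<in> open_square. fst u \<le> fst x \<and> snd u \<le> snd x}"
  by (simp add: down_set_def coord_le_def)
lemma up_eq: "up_set SQ coord_le x = {u \<in> open_square. fst x \<le> fst u \<and> snd x \<le> snd u}"
  by (simp add: up_set_def coord_le_def)

lemma lc: "locally_compact_space SQ"
  by (metis locally_compact_space_open_subset locally_compact_space_euclidean Hausdorff_space_euclidean open_sq open_openin)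

lemma hs: "Hausdorff_space SQ"
  by (simp add: Hausdorff_space_subtopology)

lemma oc: "order_connected SQ coord_le"
  unfolding order_connected_def
proof (intro ballI impI)
  fix x y assume x: "x \<in> topspace SQ" and y: "y \<in> topspace SQ" and le: "coord_le x y"
  have eq: "up_set SQ coord_le x \<inter> down_set SQ coord_le y = {fst x..fst y} \<times> {snd x..snd y}"
    unfolding up_eq down_eq using x y by (auto simp: open_square_def)
  have "connected ({fst x..fst y} \<times> {snd x..snd y})"
    by (intro connected_Times) auto
  moreover have "{fst x..fst y} \<times> {snd x..snd y} \<subseteq> open_square"
    using x y unfolding open_square_def by auto
  ultimately show "connectedin SQ (up_set SQ coord_le x \<inter> down_set SQ coord_le y)"
    unfolding eq connectedin_subtopology by simp
qed

lemma meet_eq: assumes "x \<in> open_square" "y \<in> open_square"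
  shows "meet_op SQ coord_le x y = (min (fst x) (fst y), min (snd x) (snd y))"
    and "is_meet SQ coord_le x y (min (fst x) (fst y), min (snd x) (snd y))"
proof -
  show m: "is_meet SQ coord_le x y (min (fst x) (fst y), min (snd x) (snd y))"
    using assms unfolding is_meet_def coord_le_def open_square_def by auto
  show "meet_op SQ coord_le x y = (min (fst x) (fst y), min (snd x) (snd y))"
    unfolding meet_op_def
  proof (rule the_equality)
    show "is_meet SQ coord_le x y (min (fst x) (fst y), min (snd x) (snd y))" by (rule m)
    fix m' assume "is_meet SQ coord_le x y m'"
    note h = this
    let ?c = "(min (fst x) (fst y), min (snd x) (snd y))"
    have "coord_le ?c m'" using h m unfolding is_meet_def by blast
    moreover have "coord_le m' ?c" using h m unfolding is_meet_def by blast
    ultimately show "m' = ?c" unfolding coord_le_def by (auto simp: prod_eq_iff min_def max_def)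
  qed
qed

lemma join_eq: assumes "x \<in> open_square" "y \<in> open_square"
  shows "join_op SQ coord_le x y = (max (fst x) (fst y), max (snd x) (snd y))"
    and "is_join SQ coord_le x y (max (fst x) (fst y), max (snd x) (snd y))"
proof -
  show m: "is_join SQ coord_le x y (max (fst x) (fst y), max (snd x) (snd y))"
    using assms unfolding is_join_def coord_le_def open_square_def by auto
  show "join_op SQ coord_le x y = (max (fst x) (fst y), max (snd x) (snd y))"
    unfolding join_op_def
  proof (rule the_equality)
    show "is_join SQ coord_le x y (max (fst x) (fst y), max (snd x) (snd y))" by (rule m)
    fix m' assume "is_join SQ coord_le x y m'"
    note h = this
    let ?c = "(max (fst x) (fst y), max (snd x) (snd y))"
    have "coord_le ?c m'" using h m unfolding is_join_def by blast
    moreover have "coord_le m' ?c" using h m unfolding is_join_def by blast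
    ultimately show "m' = ?c" unfolding coord_le_def by (auto simp: prod_eq_iff min_def max_def)
  qed
qed

lemma prodSQ: "prod_topology SQ SQ = top_of_set (open_square \<times> open_square)"
  by (simp add: subtopology_Times[symmetric])

lemma tl: "topological_lattice SQ coord_le"
  unfolding topological_lattice_def po_space_def
proof (intro conjI)
  show "partial_order_on_space SQ coord_le"
    unfolding partial_order_on_space_def coord_le_def by (auto simp: prod_eq_iff)
  have "{(x, y). x \<in> topspace SQ \<and> y \<in> topspace SQ \<and> coord_le x y}
      = (open_square \<times> open_square) \<inter> {p. fst (fst p) \<le> fst (snd p) \<and> snd (fst p) \<le> snd (snd p)}"
    by (auto simp: coord_le_def)
  moreover have "closed {p::(real\<times>real)\<times>(real\<times>real). fst (fst p) \<le> fst (snd p) \<and> snd (fst p) \<le> snd (snd p)}"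
    by (intro closed_Collect_conj closed_Collect_le continuous_intros)
  ultimately show "closedin (prod_topology SQ SQ) {(x, y). x \<in> topspace SQ \<and> y \<in> topspace SQ \<and> coord_le x y}"
    unfolding prodSQ by (simp add: closedin_closed_Int)
  show "\<forall>x\<in>topspace SQ. \<forall>y\<in>topspace SQ. (\<exists>m. is_meet SQ coord_le x y m) \<and> (\<exists>j. is_join SQ coord_le x y j)"
    using meet_eq(2) join_eq(2) by (metis topspace_euclidean_subtopology)
  show "continuous_map (prod_topology SQ SQ) SQ (\<lambda>(x, y). meet_op SQ coord_le x y)"
    unfolding prodSQ
  proof (rule continuous_map_eq)
    show "continuous_map (top_of_set (open_square \<times> open_square)) SQ
       (\<lambda>p. (min (fst (fst p)) (fst (snd p)), min (snd (fst p)) (snd (snd p))))"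
      by (auto simp: open_square_def intro!: continuous_intros)
  qed (auto simp: meet_eq)
  show "continuous_map (prod_topology SQ SQ) SQ (\<lambda>(x, y). join_op SQ coord_le x y)"
    unfolding prodSQ
  proof (rule continuous_map_eq)
    show "continuous_map (top_of_set (open_square \<times> open_square)) SQ
       (\<lambda>p. (max (fst (fst p)) (fst (snd p)), max (snd (fst p)) (snd (snd p))))"
      by (auto simp: open_square_def intro!: continuous_intros)
  qed (auto simp: join_eq)
qed

lemma box_nbhd:
  fixes W :: "(real\<times>real) set"
  assumes "open W" "x \<in> W"
  shows "\<exists>e>0. \<forall>a b. \<bar>a - fst x\<bar> < e \<and> \<bar>b - snd x\<bar> < e \<longrightarrow> (a, b) \<in> W"
proof -
  obtain A B where AB: "open A" "open B" "x \<in> A \<times> B" "A \<times> B \<subseteq> W"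
    using open_prod_elim[OF assms] by metis
  obtain e1 where e1: "e1 > 0" "\<forall>y. dist y (fst x) < e1 \<longrightarrow> y \<in> A"
    using AB(1,3) unfolding open_dist by (metis mem_Times_iff)
  obtain e2 where e2: "e2 > 0" "\<forall>y. dist y (snd x) < e2 \<longrightarrow> y \<in> B"
    using AB(2,3) unfolding open_dist by (metis mem_Times_iff)
  show ?thesis
    using e1 e2 AB(4) by (intro exI[of _ "min e1 e2"]) (auto simp: dist_real_def)
qed

abbreviation "DS \<equiv> down_set SQ coord_le"

lemma down_closed: "closedin SQ (DS x)"
proof -
  have "closed {u::real\<times>real. fst u \<le> fst x \<and> snd u \<le> snd x}"
    by (intro closed_Collect_conj closed_Collect_le continuous_intros)
  moreover have "DS x = open_square \<inter> {u::real\<times>real. fst u \<le> fst x \<and> snd u \<le> snd x}"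
    unfolding down_eq by blast
  ultimately show ?thesis by (simp add: closedin_closed_Int)
qed

lemma self_in_down: "x \<in> open_square \<Longrightarrow> x \<in> DS x"
  by (simp add: down_eq)

lemma down_inj: "x \<in> open_square \<Longrightarrow> y \<in> open_square \<Longrightarrow> DS x = DS y \<Longrightarrow> x = y"
proof -
  assume a: "x \<in> open_square" "y \<in> open_square" "DS x = DS y"
  have "x \<in> DS y" using self_in_down[OF a(1)] a(3) by simp
  moreover have "y \<in> DS x" using self_in_down[OF a(2)] a(3) by simp
  ultimately show "x = y" unfolding down_eq by (auto simp: prod_eq_iff)
qed

lemma hit_open:
  assumes G: "openin SQ G"
  shows "openin SQ {x \<in> open_square. DS x \<inter> G \<noteq> {}}"
proof -
  have oG: "open G" and GS: "G \<subseteq> open_square" using G openin_open_eq[OF open_sq] by auto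
  have eq: "{x \<in> open_square. DS x \<inter> G \<noteq> {}}
      = open_square \<inter> (\<Union>p\<in>G. {x. fst p < fst x \<and> snd p < snd x})"
  proof (intro set_eqI iffI)
    fix x assume "x \<in> {x \<in> open_square. DS x \<inter> G \<noteq> {}}"
    then obtain p where x: "x \<in> open_square" and p: "p \<in> DS x" "p \<in> G" by auto
    obtain e where e: "e > 0" "\<forall>a b. \<bar>a - fst p\<bar> < e \<and> \<bar>b - snd p\<bar> < e \<longrightarrow> (a, b) \<in> G"
      using box_nbhd[OF oG p(2)] by blast
    have "(fst p - e/2, snd p - e/2) \<in> G" using e by auto
    moreover have "fst p \<le> fst x" "snd p \<le> snd x" using p(1) by (auto simp: down_eq)
    ultimately show "x \<in> open_square \<inter> (\<Union>p\<in>G. {x. fst p < fst x \<and> snd p < snd x})"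
      using x e(1) by (intro IntI UN_I[of "(fst p - e/2, snd p - e/2)"]) auto
  next
    fix x assume "x \<in> open_square \<inter> (\<Union>p\<in>G. {x. fst p < fst x \<and> snd p < snd x})"
    then obtain p where x: "x \<in> open_square" and p: "p \<in> G" "fst p < fst x" "snd p < snd x" by auto
    have "p \<in> DS x" using p GS by (auto simp: down_eq)
    thus "x \<in> {x \<in> open_square. DS x \<inter> G \<noteq> {}}" using x p by auto
  qed
  have "open (open_square \<inter> (\<Union>p\<in>G. {x::real\<times>real. fst p < fst x \<and> snd p < snd x}))"
    by (intro open_Int open_sq open_UN ballI open_Collect_conj open_Collect_less continuous_intros)
  thus ?thesis unfolding eq by (simp add: openin_open_eq[OF open_sq])
qed

lemma miss_open:
  assumes K: "compactin SQ K"
  shows "openin SQ {x \<in> open_square. DS x \<inter> K = {}}"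
proof -
  have cK: "compact K" and KS: "K \<subseteq> open_square"
    using K by (auto simp: compactin_subtopology compactin_euclidean_iff)
  define Q where "Q = {q::real\<times>real. 0 \<le> fst q \<and> 0 \<le> snd q}"
  have cQ: "closed Q" unfolding Q_def
    by (intro closed_Collect_conj closed_Collect_le continuous_intros)
  define C where "C = (\<Union>x\<in>Q. \<Union>y\<in>K. {x + y})"
  have cC: "closed C" unfolding C_def using closed_compact_sums[OF cQ cK] .
  have memC: "x \<in> C \<longleftrightarrow> (\<exists>d\<in>K. fst d \<le> fst x \<and> snd d \<le> snd x)" for x
  proof
    assume "x \<in> C"
    then obtain q d where qd: "q \<in> Q" "d \<in> K" "x = q + d" unfolding C_def by blast
    hence "fst d \<le> fst x \<and> snd d \<le> snd x" unfolding Q_def by simp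
    thus "\<exists>d\<in>K. fst d \<le> fst x \<and> snd d \<le> snd x" using qd(2) by blast
  next
    assume "\<exists>d\<in>K. fst d \<le> fst x \<and> snd d \<le> snd x"
    then obtain d where d: "d \<in> K" "fst d \<le> fst x" "snd d \<le> snd x" by blast
    have "x = (x - d) + d" by simp
    moreover have "x - d \<in> Q" using d unfolding Q_def by simp
    ultimately show "x \<in> C" unfolding C_def using d(1) by (intro UN_I[of "x - d"] UN_I[of d]) auto
  qed
  have eq: "{x \<in> open_square. DS x \<inter> K = {}} = open_square \<inter> (- C)"
  proof (intro set_eqI iffI)
    fix x assume x: "x \<in> {x \<in> open_square. DS x \<inter> K = {}}"
    have "x \<notin> C"
    proof
      assume "x \<in> C"
      then obtain d where "d \<in> K" "fst d \<le> fst x" "snd d \<le> snd x" using memC by blast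
      hence "d \<in> DS x \<inter> K" using KS unfolding down_eq by auto
      thus False using x by blast
    qed
    thus "x \<in> open_square \<inter> - C" using x by blast
  next
    fix x assume x: "x \<in> open_square \<inter> - C"
    have "DS x \<inter> K = {}"
    proof (rule ccontr)
      assume "DS x \<inter> K \<noteq> {}"
      then obtain d where "d \<in> K" "d \<in> DS x" by blast
      hence "x \<in> C" unfolding memC down_eq by auto
      thus False using x by blast
    qed
    thus "x \<in> {x \<in> open_square. DS x \<inter> K = {}}" using x by blast
  qed
  have "open (open_square \<inter> (- C))" using cC open_sq by (intro open_Int open_Compl)
  thus ?thesis unfolding eq by (simp add: openin_open_eq[OF open_sq])
qed

abbreviation "BF \<equiv> {{A. A \<inter> G \<noteq> {}} | G. openin SQ G} \<union> {{A. A \<inter> D = {}} | D. compactin SQ D}"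

lemma image_closed: "DS ` open_square \<subseteq> closed_sets SQ"
  using down_closed by (auto simp: closed_sets_def)

lemma fell_sub: "subtopology (fell_topology SQ) (DS ` open_square) = subtopology (topology_generated_by BF) (DS ` open_square)"
proof -
  have "closed_sets SQ \<inter> DS ` open_square = DS ` open_square" using image_closed by blast
  thus ?thesis unfolding fell_topology_def subtopology_subtopology by simp
qed

lemma UBF: "\<Union>BF = UNIV"
proof -
  have "UNIV = {A::(real\<times>real) set. A \<inter> {} = {}}" by simp
  moreover have "compactin SQ {}" by simp
  ultimately have "UNIV \<in> BF" by blast
  thus ?thesis by blast
qed

lemma cont_down: "continuous_map SQ (subtopology (topology_generated_by BF) (DS ` open_square)) DS"
  unfolding continuous_map_in_subtopology
proof (intro conjI)
  show "DS \<in> topspace SQ \<rightarrow> DS ` open_square" by simp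
  show "continuous_map SQ (topology_generated_by BF) DS"
  proof (rule continuous_on_generated_topo)
    show "DS ` topspace SQ \<subseteq> \<Union>BF" using UBF by simp
    fix U assume "U \<in> BF"
    then consider G where "openin SQ G" "U = {A. A \<inter> G \<noteq> {}}"
      | K where "compactin SQ K" "U = {A. A \<inter> K = {}}" by blast
    thus "openin SQ (DS -` U \<inter> topspace SQ)"
    proof cases
      case 1
      have "DS -` U \<inter> topspace SQ = {x \<in> open_square. DS x \<inter> G \<noteq> {}}" using 1 by auto
      thus ?thesis using hit_open[OF 1(1)] by simp
    next
      case 2
      have "DS -` U \<inter> topspace SQ = {x \<in> open_square. DS x \<inter> K = {}}" using 2 by auto
      thus ?thesis using miss_open[OF 2(1)] by simp
    qed
  qed
qed

lemma open_down: "open_map SQ (subtopology (topology_generated_by BF) (DS ` open_square)) DS"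
  unfolding open_map_def
proof (intro allI impI)
  fix U assume U: "openin SQ U"
  have oU: "open U" and US: "U \<subseteq> open_square" using U openin_open_eq[OF open_sq] by auto
  show "openin (subtopology (topology_generated_by BF) (DS ` open_square)) (DS ` U)"
  proof (subst openin_subopen, intro ballI)
    fix Y assume "Y \<in> DS ` U"
    then obtain x where xU: "x \<in> U" and Y: "Y = DS x" by blast
    have xS: "x \<in> open_square" using xU US by blast
    hence x: "0 < fst x" "fst x < 1" "0 < snd x" "snd x < 1" unfolding open_square_def by auto
    obtain e where e: "e > 0" "\<forall>a b. \<bar>a - fst x\<bar> < e \<and> \<bar>b - snd x\<bar> < e \<longrightarrow> (a, b) \<in> U"
      using box_nbhd[OF oU xU] by blast
    define d where "d = min (min e (fst x)) (min (snd x) (min (1 - fst x) (1 - snd x))) / 2"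
    have d: "0 < d" "d < e" "d < fst x" "d < snd x" "d < 1 - fst x" "d < 1 - snd x"
      using e(1) x unfolding d_def by auto
    define G0 where "G0 = open_square \<inter> {p. fst x - d < fst p \<and> snd x - d < snd p}"
    define c1 where "c1 = (fst x + d, snd x - d)"
    define c2 where "c2 = (fst x - d, snd x + d)"
    have c1S: "c1 \<in> open_square" and c2S: "c2 \<in> open_square"
      using d x unfolding c1_def c2_def open_square_def by auto
    have oG0: "openin SQ G0"
    proof -
      have "open {p::real\<times>real. fst x - d < fst p \<and> snd x - d < snd p}"
        by (intro open_Collect_conj open_Collect_less continuous_intros)
      thus ?thesis unfolding G0_def by (simp add: openin_open_Int)
    qed
    define Ob where "Ob = {A. A \<inter> G0 \<noteq> {}} \<inter> {A. A \<inter> {c1} = {}} \<inter> {A. A \<inter> {c2} = {}}"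
    have "openin (topology_generated_by BF) Ob"
    proof -
      have "{A. A \<inter> G0 \<noteq> {}} \<in> BF" using oG0 by blast
      moreover have "{A. A \<inter> {c1} = {}} \<in> BF" using c1S by (intro UnI2) (auto intro!: exI[of _ "{c1}"])
      moreover have "{A. A \<inter> {c2} = {}} \<in> BF" using c2S by (intro UnI2) (auto intro!: exI[of _ "{c2}"])
      ultimately show ?thesis unfolding Ob_def by (intro openin_Int topology_generated_by_Basis)
    qed
    hence oW: "openin (subtopology (topology_generated_by BF) (DS ` open_square)) (Ob \<inter> DS ` open_square)"
      by (rule openin_subtopology_Int)
    have "DS x \<in> Ob"
    proof -
      have "x \<in> DS x \<inter> G0" using xS d(1) self_in_down[OF xS] unfolding G0_def by auto
      moreover have "c1 \<notin> DS x" "c2 \<notin> DS x" using d(1) unfolding c1_def c2_def down_eq by auto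
      ultimately show ?thesis unfolding Ob_def by auto
    qed
    moreover have "Ob \<inter> DS ` open_square \<subseteq> DS ` U"
    proof
      fix A assume "A \<in> Ob \<inter> DS ` open_square"
      then obtain y where yS: "y \<in> open_square" and A: "A = DS y" and AO: "DS y \<in> Ob" by blast
      obtain p where p: "p \<in> DS y" "p \<in> G0" using AO unfolding Ob_def by blast
      have l1: "fst x - d < fst y" "snd x - d < snd y" using p unfolding G0_def down_eq by auto
      have "c1 \<notin> DS y" "c2 \<notin> DS y" using AO unfolding Ob_def by auto
      hence "fst y < fst x + d" "snd y < snd x + d" using c1S c2S l1 unfolding c1_def c2_def down_eq by auto
      hence "\<bar>fst y - fst x\<bar> < e" "\<bar>snd y - snd x\<bar> < e" using l1 d(2) by auto
      hence "y \<in> U" using e(2)[rule_format, of "fst y" "snd y"] by simp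
      thus "A \<in> DS ` U" using A by blast
    qed
    ultimately show "\<exists>T. openin (subtopology (topology_generated_by BF) (DS ` open_square)) T \<and> Y \<in> T \<and> T \<subseteq> DS ` U"
      using oW Y xS by blast
  qed
qed

lemma embeds: "topologically_order_embeds_down SQ coord_le"
  unfolding topologically_order_embeds_down_def topspace_euclidean_subtopology fell_sub
proof (intro conjI ballI)
  fix x assume "x \<in> open_square"
  show "DS x \<in> closed_sets SQ" using down_closed by (simp add: closed_sets_def)
next
  fix x y assume x: "x \<in> open_square" and y: "y \<in> open_square"
  show "coord_le x y \<longleftrightarrow> DS x \<subseteq> DS y"
  proof
    assume "coord_le x y" thus "DS x \<subseteq> DS y" unfolding down_eq coord_le_def by auto
  next
    assume "DS x \<subseteq> DS y"
    moreover have "x \<in> DS x" using self_in_down x by simp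
    ultimately have "x \<in> DS y" by blast
    thus "coord_le x y" unfolding down_eq coord_le_def by auto
  qed
next
  show "homeomorphic_map SQ (subtopology (topology_generated_by BF) (DS ` open_square)) DS"
  proof (rule bijective_open_imp_homeomorphic_map)
    show "continuous_map SQ (subtopology (topology_generated_by BF) (DS ` open_square)) DS"
      using cont_down by simp
    show "open_map SQ (subtopology (topology_generated_by BF) (DS ` open_square)) DS"
      using open_down by simp
    show "DS ` topspace SQ = topspace (subtopology (topology_generated_by BF) (DS ` open_square))"
      using UBF by simp
    show "inj_on DS (topspace SQ)" using down_inj by (auto simp: inj_on_def)
  qed
qed

abbreviation "BV \<equiv> {{A. A \<inter> G \<noteq> {}} | G. openin SQ G} \<union> {{A. A \<inter> E = {}} | E. closedin SQ E}"

lemma viet_sub: "subtopology (vietoris_topology SQ) (DS ` open_square) = subtopology (topology_generated_by BV) (DS ` open_square)"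
proof -
  have "closed_sets SQ \<inter> DS ` open_square = DS ` open_square" using image_closed by blast
  thus ?thesis unfolding vietoris_topology_def subtopology_subtopology by simp
qed

lemma discont:
  assumes xS: "x \<in> open_square"
  shows "\<not> continuous_map_at SQ (subtopology (vietoris_topology SQ) (DS ` open_square)) DS x"
proof
  assume c: "continuous_map_at SQ (subtopology (vietoris_topology SQ) (DS ` open_square)) DS x"
  have x: "0 < fst x" "fst x < 1" "0 < snd x" "snd x < 1" using xS unfolding open_square_def by auto
  define E where "E = open_square \<inter> {p::real\<times>real. fst x + snd p \<le> fst p}"
  have cE: "closedin SQ E"
  proof -
    have "closed {p::real\<times>real. fst x + snd p \<le> fst p}"
      by (intro closed_Collect_le continuous_intros)
    thus ?thesis unfolding E_def by (simp add: closedin_closed_Int)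
  qed
  define V where "V = {A. A \<inter> E = {}} \<inter> DS ` open_square"
  have "openin (topology_generated_by BV) {A. A \<inter> E = {}}"
    using cE by (intro topology_generated_by_Basis) blast
  hence oV: "openin (subtopology (vietoris_topology SQ) (DS ` open_square)) V"
    unfolding viet_sub V_def by (rule openin_subtopology_Int)
  have "DS x \<inter> E = {}"
    unfolding down_eq unfolding E_def open_square_def by auto
  hence "DS x \<in> V" unfolding V_def using xS by blast
  then obtain W where W: "openin SQ W" "x \<in> W" "DS ` W \<subseteq> V"
    using c oV unfolding continuous_map_at_def by blast
  have oW: "open W" using W(1) openin_open_eq[OF open_sq] by auto
  obtain e where e: "e > 0" "\<forall>a b. \<bar>a - fst x\<bar> < e \<and> \<bar>b - snd x\<bar> < e \<longrightarrow> (a, b) \<in> W"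
    using box_nbhd[OF oW W(2)] by blast
  define d where "d = min (e/2) ((1 - fst x)/2)"
  have d: "0 < d" "d < e" "fst x + d < 1" using e(1) x unfolding d_def by (auto simp: min_def field_simps)
  define y where "y = (fst x + d, snd x)"
  have "y \<in> W" using e(2)[rule_format, of "fst x + d" "snd x"] d unfolding y_def by auto
  hence "DS y \<in> V" using W(3) by blast
  hence "DS y \<inter> E = {}" unfolding V_def by blast
  moreover have "(fst x + d, min d (snd x)) \<in> DS y \<inter> E"
    using x d unfolding down_eq unfolding y_def E_def open_square_def by auto
  ultimately show False by blast
qed

theorem mainTheorem10:
  defines "T \<equiv> subtopology euclidean open_square"
  shows "(locally_compact_space T \<and> order_connected T coord_le \<and> Hausdorff_space T
         \<and> topological_lattice T coord_le)
    \<and> topologically_order_embeds_down T coord_le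
    \<and> (\<forall>x\<in>topspace T. \<not> continuous_map_at T
           (subtopology (vietoris_topology T) (down_set T coord_le ` topspace T))
           (down_set T coord_le) x)"
  unfolding T_def topspace_euclidean_subtopology using lc oc hs tl embeds discont by blast

end
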